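(* Let $\mathcal{T}$ be a tree with costs $c:V(\mathcal{T})\to\mathbb{R}_{>0}$, let $a\ge 0$ be such that some vertex $v$ has $c(v)\le a$, and let $k=k(\mathcal{T},c)$. Construct $\mathcal{X},\mathcal{Y},\mathcal{Z}$ and $\mathcal{T}_{\mathcal{Z}}$ as described (for any choices made in the construction). Then $|V(\mathcal{T}_{\mathcal{Z}})|\le 4k-3$.
   Context: For $t\ge 0$, a heavy module with respect to $t$ is a set $H\subseteq V(\mathcal{T})$ with $\mathcal{T}[H]$ connected, $c(v)>t$ for all $v\in H$, and maximal with these properties; $k(\mathcal{T},c,t)$ is the number of such modules and $k(\mathcal{T},c)=\max_{t\ge0}k(\mathcal{T},c,t)$. For $S\subseteq V(\mathcal{T})$, $\mathcal{T}\langle S\rangle$ is the minimal subtree containing $S$; for vertices $u,v$, $\mathcal{P}_{\mathcal{T}}(u,v)$ is the set of vertices on the $u$–$v$ path excluding $u,v$. Construction: $\mathcal{X}$ contains one arbitrarily chosen vertex from each heavy module with respect to $a$. $\mathcal{Y}=\mathcal{X}\cup\{v\in V(\mathcal{T}\langle\mathcal{X}\rangle):\deg_{\mathcal{T}\langle\mathcal{X}\rangle}(v)\ge 3\}$. $\mathcal{Z}$ consists of $\mathcal{Y}$ together with, for every pair $u,v\in\mathcal{Y}$ with $\mathcal{P}_{\mathcal{T}}(u,v)\ne\emptyset$ and $\mathcal{P}_{\mathcal{T}}(u,v)\cap\mathcal{Y}=\emptyset$, a vertex of $\mathcal{P}_{\mathcal{T}}(u,v)$ of minimum cost. The auxiliary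 tree is $\mathcal{T}_{\mathcal{Z}}$ with vertex set $\mathcal{Z}$ and edges $uv$ for all $u,v\in\mathcal{Z}$ with $\mathcal{P}_{\mathcal{T}}(u,v)\cap\mathcal{Z}=\emptyset$. *)

theory Defs
  imports Complex_Main
begin

definition is_walk :: "('a \<Rightarrow> 'a \<Rightarrow> bool) \<Rightarrow> 'a list \<Rightarrow> bool" where
  "is_walk E xs \<longleftrightarrow> xs \<noteq> [] \<and> (\<forall>i. Suc i < length xs \<longrightarrow> E (xs ! i) (xs ! Suc i))"

definition is_path :: "('a \<Rightarrow> 'a \<Rightarrow> bool) \<Rightarrow> 'a list \<Rightarrow> bool" where
  "is_path E xs \<longleftrightarrow> is_walk E xs \<and> distinct xs"

definition is_cycle :: "('a \<Rightarrow> 'a \<Rightarrow> bool) \<Rightarrow> 'a list \<Rightarrow> bool" where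
  "is_cycle E xs \<longleftrightarrow> is_path E xs \<and> length xs \<ge> 3 \<and> E (last xs) (hd xs)"

definition simple_graph :: "'a set \<Rightarrow> ('a \<Rightarrow> 'a \<Rightarrow> bool) \<Rightarrow> bool" where
  "simple_graph V E \<longleftrightarrow> finite V \<and> (\<forall>u v. E u v \<longrightarrow> u \<in> V \<and> v \<in> V \<and> E v u \<and> u \<noteq> v)"

definition induced_connected :: "('a \<Rightarrow> 'a \<Rightarrow> bool) \<Rightarrow> 'a set \<Rightarrow> bool" where
  "induced_connected E H \<longleftrightarrow>
     (\<forall>u\<in>H. \<forall>v\<in>H. \<exists>xs. is_path E xs \<and> hd xs = u \<and> last xs = v \<and> set xs \<subseteq> H)"

definition is_tree :: "'a set \<Rightarrow> ('a \<Rightarrow> 'a \<Rightarrow> bool) \<Rightarrow> bool" where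
  "is_tree V E \<longleftrightarrow> simple_graph V E \<and> V \<noteq> {} \<and> induced_connected E V \<and> (\<nexists>xs. is_cycle E xs)"

text \<open>P_T(u,v): inner vertices of the u--v path (unique in a tree), excluding u and v.\<close>
definition path_interior :: "('a \<Rightarrow> 'a \<Rightarrow> bool) \<Rightarrow> 'a \<Rightarrow> 'a \<Rightarrow> 'a set" where
  "path_interior E u v = {w. \<exists>xs. is_path E xs \<and> hd xs = u \<and> last xs = v \<and> w \<in> set xs \<and> w \<noteq> u \<and> w \<noteq> v}"

text \<open>Vertex set of the minimal subtree T<S> containing S (for S in a tree).\<close>
definition span_vertices :: "('a \<Rightarrow> 'a \<Rightarrow> bool) \<Rightarrow> 'a set \<Rightarrow> 'a set" where
  "span_vertices E S = S \<union> (\<Union>u\<in>S. \<Union>v\<in>S. path_interior E u v)"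

definition deg_in :: "('a \<Rightarrow> 'a \<Rightarrow> bool) \<Rightarrow> 'a set \<Rightarrow> 'a \<Rightarrow> nat" where
  "deg_in E W v = card {w \<in> W. E v w}"

definition heavy_module :: "'a set \<Rightarrow> ('a \<Rightarrow> 'a \<Rightarrow> bool) \<Rightarrow> ('a \<Rightarrow> real) \<Rightarrow> real \<Rightarrow> 'a set \<Rightarrow> bool" where
  "heavy_module V E c t H \<longleftrightarrow>
     H \<subseteq> V \<and> H \<noteq> {} \<and> induced_connected E H \<and> (\<forall>v\<in>H. c v > t) \<and>
     (\<forall>H'. H \<subseteq> H' \<and> H' \<subseteq> V \<and> H' \<noteq> {} \<and> induced_connected E H' \<and> (\<forall>v\<in>H'. c v > t) \<longrightarrow> H' = H)"

definition k_t :: "'a set \<Rightarrow> ('a \<Rightarrow> 'a \<Rightarrow> bool) \<Rightarrow> ('a \<Rightarrow> real) \<Rightarrow> real \<Rightarrow> nat" where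
  "k_t V E c t = card {H. heavy_module V E c t H}"

text \<open>k(T,c) = max over t \<ge> 0 of k(T,c,t) (finitely many values for a finite tree).\<close>
definition k_max :: "'a set \<Rightarrow> ('a \<Rightarrow> 'a \<Rightarrow> bool) \<Rightarrow> ('a \<Rightarrow> real) \<Rightarrow> nat" where
  "k_max V E c = Max {k_t V E c t | t. t \<ge> 0}"

end

theory Submission
  imports Defs
begin


lemma walk_succ: "is_walk E xs \<longleftrightarrow> xs \<noteq> [] \<and> successively E xs"
  unfolding is_walk_def successively_conv_nth by auto

lemma path_succ: "is_path E xs \<longleftrightarrow> xs \<noteq> [] \<and> successively E xs \<and> distinct xs"
  unfolding is_path_def walk_succ by auto

lemma succ_take: "successively P xs \<Longrightarrow> successively P (take n xs)"
  by (metis append_take_drop_id successively_append_iff)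

lemma succ_drop: "successively P xs \<Longrightarrow> successively P (drop n xs)"
  by (metis append_take_drop_id successively_append_iff)

lemma path_take: "is_path E xs \<Longrightarrow> 0 < n \<Longrightarrow> is_path E (take n xs)"
  unfolding path_succ by (auto simp: succ_take)

lemma path_drop: "is_path E xs \<Longrightarrow> n < length xs \<Longrightarrow> is_path E (drop n xs)"
  unfolding path_succ by (auto simp: succ_drop)

lemma sym_E: "simple_graph V E \<Longrightarrow> (\<lambda>x y. E y x) = E"
  unfolding simple_graph_def by (intro ext) blast

lemma succ_rev_sym: assumes "simple_graph V E" shows "successively E (rev xs) = successively E xs"
proof -
  have s: "\<And>x y. E x y \<Longrightarrow> E y x" using assms unfolding simple_graph_def by blast
  have "successively (\<lambda>x y. E y x) xs = successively E xs"
    by (induction xs rule: induct_list012) (auto intro: s)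
  then show ?thesis by simp
qed

lemma path_rev: "simple_graph V E \<Longrightarrow> is_path E xs \<Longrightarrow> is_path E (rev xs)"
  unfolding path_succ using succ_rev_sym[of V E] by simp

lemma distinct_hd_last: "distinct ys \<Longrightarrow> ys \<noteq> [] \<Longrightarrow> hd ys = last ys \<Longrightarrow> ys = [hd ys]"
proof (cases ys)
  case (Cons y ys')
  assume "distinct ys" "hd ys = last ys"
  then show ?thesis using Cons by (cases "ys' = []") auto
qed simp

lemma path_set_V: "simple_graph V E \<Longrightarrow> is_path E p \<Longrightarrow> hd p \<in> V \<Longrightarrow> set p \<subseteq> V"
proof (induction p)
  case Nil then show ?case by simp
next
  case (Cons x p)
  have E: "\<And>u v. E u v \<Longrightarrow> u \<in> V \<and> v \<in> V" using Cons(2) unfolding simple_graph_def by blast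
  show ?case
  proof (cases p)
    case (Cons y p')
    have "E x y" using Cons \<open>is_path E (x # p)\<close> by (simp add: path_succ)
    moreover have "is_path E p" using Cons \<open>is_path E (x # p)\<close> by (simp add: path_succ)
    ultimately show ?thesis using Cons E \<open>hd (x # p) \<in> V\<close> \<open>simple_graph V E\<close> Cons.IH by auto
  qed (use Cons in simp)
qed

lemma diverge_cycle:
  assumes sg: "simple_graph V E"
    and pa: "is_path E (u # as)" and pb: "is_path E (u # bs)"
    and ne: "as \<noteq> []" "bs \<noteq> []" and hd: "hd as \<noteq> hd bs" and la: "last as = last bs"
  shows "\<exists>c. is_cycle E c"
proof -
  have symE: "\<And>x y. E x y \<Longrightarrow> E y x" using sg unfolding simple_graph_def by blast
  have sa: "successively E (u # as)" and da: "distinct (u # as)"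
    and sb: "successively E (u # bs)" and db: "distinct (u # bs)"
    using pa pb unfolding path_succ by auto
  have ex: "\<exists>i. i < length as \<and> as ! i \<in> set bs"
    using ne la by (metis diff_less last_conv_nth last_in_set length_greater_0_conv zero_less_one)
  define i where "i = (LEAST i. i < length as \<and> as ! i \<in> set bs)"
  have i1: "i < length as" "as ! i \<in> set bs" using LeastI_ex[OF ex] unfolding i_def by auto
  have i2: "\<And>k. k < i \<Longrightarrow> as ! k \<notin> set bs"
    using not_less_Least i_def i1(1) by (metis dual_order.strict_trans)
  obtain j where j: "j < length bs" "bs ! j = as ! i" using i1(2) by (metis in_set_conv_nth)
  define c where "c = u # take (Suc i) as @ rev (take j bs)"
  have ij: "i + j \<ge> 1"
  proof (rule ccontr)
    assume "\<not> ?thesis" then have "i = 0" "j = 0" by auto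
    then show False using j hd ne by (simp add: hd_conv_nth)
  qed
  have len: "length c \<ge> 3" unfolding c_def using ij i1 j by auto
  have dis: "distinct c"
  proof -
    have "set (take (Suc i) as) \<inter> set (take j bs) = {}"
    proof (rule ccontr)
      assume "\<not> ?thesis"
      then obtain z where z1: "z \<in> set (take (Suc i) as)" and z2: "z \<in> set (take j bs)" by blast
      from z1 obtain k where k: "k < Suc i" "k < length as" "z = as ! k"
        by (auto simp: in_set_conv_nth)
      from z2 obtain l where l: "l < j" "z = bs ! l" using j(1)
        by (auto simp: in_set_conv_nth)
      show False
      proof (cases "k < i")
        case True then show ?thesis using i2 k l j(1) by (metis nth_mem order.strict_trans)
      next
        case False then have "k = i" using k by auto
        then have "bs ! l = bs ! j" using k l j by simp
        moreover have "distinct bs" using db by simp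
        ultimately show ?thesis using nth_eq_iff_index_eq[of bs l j] l j by auto
      qed
    qed
    moreover have "u \<notin> set as" "u \<notin> set bs" "distinct as" "distinct bs" using da db by auto
    ultimately show ?thesis unfolding c_def
      by (auto dest: in_set_takeD)
  qed
  have sc: "successively E c"
  proof -
    have s1: "successively E (u # take (Suc i) as)"
      using succ_take[OF sa, of "Suc (Suc i)"] by simp
    have s2: "successively E (rev (take j bs))"
      proof -
      have "successively E bs" using sb by (cases bs) auto
      then show ?thesis using succ_take[of E bs j] succ_rev_sym[OF sg] by simp
    qed
    have "j > 0 \<Longrightarrow> E (as ! i) (bs ! (j - 1))"
      using successively_nth[OF sb, of j] j symE by simp
    moreover have "last (u # take (Suc i) as) = as ! i" using i1
      by (simp add: take_Suc_conv_app_nth)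
    moreover have "hd (rev (take j bs)) = bs ! (j - 1)" if "j > 0"
    proof -
      have "take j bs \<noteq> []" using ne that by simp
      then have "last (take j bs) = take j bs ! (length (take j bs) - 1)" by (rule last_conv_nth)
      then show ?thesis using j that by (simp add: hd_rev)
    qed
    ultimately show ?thesis unfolding c_def using s1 s2
      by (subst append_Cons[symmetric], subst successively_append_iff) auto
  qed
  have lst: "last c = hd bs"
  proof (cases "j = 0")
    case True
    then show ?thesis unfolding c_def using i1 j ne by (simp add: take_Suc_conv_app_nth hd_conv_nth)
  next
    case False
    then show ?thesis unfolding c_def using ne by (simp add: last_rev hd_take)
  qed
  have "E u (hd bs)" using sb ne by (simp add: successively_Cons)
  then have "E (last c) (hd c)" using lst symE unfolding c_def by simp
  then have "is_cycle E c" unfolding is_cycle_def path_succ using sc dis len by (auto simp: c_def)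
  then show ?thesis by blast
qed


lemma path_unique:
  assumes tree: "is_tree V E"
  shows "is_path E xs \<Longrightarrow> is_path E ys \<Longrightarrow> hd xs = hd ys \<Longrightarrow> last xs = last ys \<Longrightarrow> xs = ys"
proof (induction xs arbitrary: ys)
  case Nil then show ?case by (simp add: path_succ)
next
  case (Cons u xs')
  have sg: "simple_graph V E" and nc: "\<nexists>c. is_cycle E c" using tree unfolding is_tree_def by auto
  show ?case
  proof (cases "xs' = []")
    case True
    then have "hd ys = last ys" "ys \<noteq> []" "distinct ys" using Cons.prems by (auto simp: path_succ)
    then have "ys = [hd ys]" using distinct_hd_last by blast
    then show ?thesis using Cons.prems True by simp
  next
    case False
    obtain ys' where ys: "ys = u # ys'" using Cons.prems by (cases ys) (auto simp: path_succ)
    have dx: "u \<notin> set xs'" using Cons.prems by (simp add: path_succ)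
    have lx: "last xs' \<in> set xs'" using False by simp
    show ?thesis
    proof (cases "ys' = []")
      case True
      then have "last xs' = u" using Cons.prems ys False by simp
      then show ?thesis using dx lx by simp
    next
      case False2: False
      have px: "is_path E xs'" using path_drop[OF Cons.prems(1), of 1] False by simp
      have py: "is_path E ys'" using path_drop[OF Cons.prems(2), of 1] False2 ys by simp
      have ll: "last xs' = last ys'" using Cons.prems ys False False2 by simp
      show ?thesis
      proof (cases "hd xs' = hd ys'")
        case True
        then have "xs' = ys'" using Cons.IH[OF px py True ll] by simp
        then show ?thesis using ys by simp
      next
        case False3: False
        have "\<exists>c. is_cycle E c"
          by (rule diverge_cycle[OF sg Cons.prems(1) Cons.prems(2)[unfolded ys] False False2 False3 ll])
        then show ?thesis using nc by blast
      qed
    qed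
  qed
qed

locale rtree =
  fixes V :: "'a set" and E :: "'a \<Rightarrow> 'a \<Rightarrow> bool" and r :: 'a
  assumes tree: "is_tree V E" and rV: "r \<in> V"
begin

lemma sg: "simple_graph V E" using tree unfolding is_tree_def by auto
lemma nocyc: "\<not> is_cycle E c" using tree unfolding is_tree_def by auto
lemma finV: "finite V" using sg unfolding simple_graph_def by auto
lemma EV: "E u v \<Longrightarrow> u \<in> V \<and> v \<in> V \<and> E v u \<and> u \<noteq> v" using sg unfolding simple_graph_def by blast

definition tp :: "'a \<Rightarrow> 'a list" where
  "tp w = (THE p. is_path E p \<and> hd p = w \<and> last p = r)"

lemma tp_ex1: "w \<in> V \<Longrightarrow> \<exists>!p. is_path E p \<and> hd p = w \<and> last p = r"
proof -
  assume w: "w \<in> V"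
  have "induced_connected E V" using tree unfolding is_tree_def by auto
  then obtain p where "is_path E p \<and> hd p = w \<and> last p = r" using w rV unfolding induced_connected_def by blast
  moreover have "\<And>q. is_path E q \<and> hd q = w \<and> last q = r \<Longrightarrow> q = p"
    using path_unique[OF tree] calculation by metis
  ultimately show ?thesis by blast
qed

lemma tp: "w \<in> V \<Longrightarrow> is_path E (tp w) \<and> hd (tp w) = w \<and> last (tp w) = r"
  unfolding tp_def by (rule theI'[OF tp_ex1])

lemma tp_eq: "w \<in> V \<Longrightarrow> is_path E p \<Longrightarrow> hd p = w \<Longrightarrow> last p = r \<Longrightarrow> tp w = p"
  unfolding tp_def by (rule the1_equality[OF tp_ex1]) auto

lemma tp_ne: "w \<in> V \<Longrightarrow> tp w \<noteq> []" using tp[of w] by (auto simp: path_succ)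

lemma tp_set: "w \<in> V \<Longrightarrow> set (tp w) \<subseteq> V" using tp[of w] path_set_V[OF sg] by auto

lemma tp_r: "tp r = [r]"
  by (rule tp_eq[OF rV]) (auto simp: path_succ)

definition up :: "'a \<Rightarrow> 'a" where "up w = tp w ! 1"

lemma tp_up: assumes w: "w \<in> V" "w \<noteq> r"
  shows "tp w = w # tp (up w)" "up w \<in> V" "E w (up w)"
proof -
  obtain q where q: "tp w = w # q" using tp[OF w(1)] tp_ne[OF w(1)] by (cases "tp w") auto
  have qne: "q \<noteq> []" using tp[OF w(1)] q w(2) by auto
  have pq: "is_path E q" using path_drop[of E "tp w" 1] tp[OF w(1)] q qne by simp
  have uq: "up w = hd q" unfolding up_def using q qne by (simp add: hd_conv_nth)
  show uV: "up w \<in> V" using tp_set[OF w(1)] q qne uq by auto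
  have "tp (up w) = q" by (rule tp_eq[OF uV pq]) (use uq tp[OF w(1)] q qne in auto)
  then show "tp w = w # tp (up w)" using q by simp
  show "E w (up w)" using tp[OF w(1)] q qne uq by (auto simp: path_succ successively_Cons)
qed

lemma tp_drop: "w \<in> V \<Longrightarrow> k < length (tp w) \<Longrightarrow> tp (tp w ! k) = drop k (tp w)"
proof (induction k arbitrary: w)
  case 0
  then show ?case using tp[of w] tp_ne[of w] by (simp add: hd_conv_nth)
next
  case (Suc k)
  have "w \<noteq> r" using Suc.prems tp_r by auto
  then have "tp w = w # tp (up w)" "up w \<in> V" using tp_up Suc.prems by auto
  then show ?case using Suc.IH[of "up w"] Suc.prems by simp
qed

lemma tp_nth_V: "w \<in> V \<Longrightarrow> k < length (tp w) \<Longrightarrow> tp w ! k \<in> V"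
  using tp_set nth_mem by blast

lemma tp_nth_up: assumes "w \<in> V" "Suc k < length (tp w)"
  shows "tp w ! k \<noteq> r" "up (tp w ! k) = tp w ! Suc k"
proof -
  have d: "tp (tp w ! k) = drop k (tp w)" using tp_drop assms by simp
  then show "tp w ! k \<noteq> r" using assms tp_r by (metis Suc_lessD length_Cons length_drop list.size(3) zero_less_diff Suc_less_eq less_diff_conv plus_1_eq_Suc add.commute less_numeral_extra(3) zero_less_Suc)
  show "up (tp w ! k) = tp w ! Suc k" unfolding up_def d using assms by simp
qed

definition dep :: "'a \<Rightarrow> nat" where "dep w = length (tp w)"

lemma dep_up: "w \<in> V \<Longrightarrow> w \<noteq> r \<Longrightarrow> dep w = Suc (dep (up w))"
  unfolding dep_def using tp_up by (metis length_Cons)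

definition Up :: "'a \<Rightarrow> 'a \<Rightarrow> bool" where "Up a b \<longleftrightarrow> a \<in> V \<and> a \<noteq> r \<and> b = up a"

end




context rtree begin

lemma edge: assumes e: "E a b" shows "Up a b \<or> Up b a"
proof -
  have ab: "a \<in> V" "b \<in> V" "E b a" "a \<noteq> b" using EV[OF e] by auto
  show ?thesis
  proof (cases "b \<in> set (tp a)")
    case True
    then obtain k where k: "k < length (tp a)" "tp a ! k = b" by (metis in_set_conv_nth)
    have k0: "k \<noteq> 0"
    proof
      assume "k = 0"
      then have "b = hd (tp a)" using k tp_ne[OF ab(1)] by (simp add: hd_conv_nth)
      then show False using tp[OF ab(1)] ab by simp
    qed
    show ?thesis
    proof (cases "k = 1")
      case True
      then have "a \<noteq> r" using k tp_r by auto
      then show ?thesis using True k unfolding Up_def up_def using ab by auto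
    next
      case False
      define c where "c = take (Suc k) (tp a)"
      have pc: "is_path E c" unfolding c_def using path_take tp[OF ab(1)] by auto
      have lc: "length c \<ge> 3" unfolding c_def using k k0 False by auto
      have hc: "hd c = a" unfolding c_def using tp[OF ab(1)] tp_ne[OF ab(1)] by simp
      have "last c = b" unfolding c_def using k by (simp add: take_Suc_conv_app_nth)
      then have "is_cycle E c" unfolding is_cycle_def using pc lc hc ab by simp
      then show ?thesis using nocyc by blast
    qed
  next
    case False
    define p where "p = b # tp a"
    have pp: "is_path E p" unfolding p_def using tp[OF ab(1)] tp_ne[OF ab(1)] False ab
      by (auto simp: path_succ successively_Cons)
    have tb: "tp b = p" by (rule tp_eq[OF ab(2) pp]) (use tp[OF ab(1)] tp_ne[OF ab(1)] in \<open>auto simp: p_def\<close>)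
    have "r \<in> set (tp a)" using tp[OF ab(1)] tp_ne[OF ab(1)] last_in_set by metis
    then have "b \<noteq> r" using False by auto
    moreover have "up b = a" unfolding up_def tb p_def using tp[OF ab(1)] tp_ne[OF ab(1)] by (simp add: hd_conv_nth)
    ultimately show ?thesis unfolding Up_def using ab by auto
  qed
qed

lemma upchain_tp: "successively Up q \<Longrightarrow> q \<noteq> [] \<Longrightarrow> hd q \<in> V \<Longrightarrow> q = take (length q) (tp (hd q))"
proof (induction q)
  case Nil then show ?case by simp
next
  case (Cons w q')
  show ?case
  proof (cases "q' = []")
    case True
    then show ?thesis using tp[of w] tp_ne[of w] Cons.prems by (cases "tp w") auto
  next
    case False
    have u: "Up w (hd q')" "successively Up q'" using Cons.prems False by (auto simp: successively_Cons)
    then have w: "w \<noteq> r" "hd q' = up w" unfolding Up_def by auto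
    have "up w \<in> V" using tp_up w Cons.prems by auto
    then have "q' = take (length q') (tp (up w))" using Cons.IH u False w by simp
    moreover have "tp w = w # tp (up w)" using tp_up w Cons.prems by auto
    ultimately show ?thesis by simp
  qed
qed

lemma turn: "is_path E p \<Longrightarrow> \<exists>i<length p. successively Up (take (Suc i) p) \<and> successively Up (rev (drop i p))"
proof (induction p)
  case Nil then show ?case by (simp add: path_succ)
next
  case (Cons x p')
  show ?case
  proof (cases "p' = []")
    case True then show ?thesis by auto
  next
    case False
    have pp: "is_path E p'" using path_drop[OF Cons.prems, of 1] False by simp
    obtain i' where i': "i' < length p'" "successively Up (take (Suc i') p')" "successively Up (rev (drop i' p'))"
      using Cons.IH[OF pp] by blast
    have e: "E x (hd p')" using Cons.prems False by (simp add: path_succ successively_Cons)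
    have xn: "x \<notin> set p'" using Cons.prems by (simp add: path_succ)
    consider "Up x (hd p')" | "Up (hd p') x" using edge[OF e] by blast
    then show ?thesis
    proof cases
      case 1
      have "take (Suc i') p' \<noteq> []" "hd (take (Suc i') p') = hd p'" using False by auto
      then have "successively Up (take (Suc (Suc i')) (x # p'))" using 1 i'(2) by (simp add: successively_Cons)
      moreover have "drop (Suc i') (x # p') = drop i' p'" by simp
      ultimately show ?thesis using i' by (intro exI[of _ "Suc i'"]) auto
    next
      case 2
      show ?thesis
      proof (cases "i' = 0")
        case True
        have "successively Up (rev p' @ [x])" using i'(3) True 2 False
          by (simp add: successively_append_iff last_rev)
        then show ?thesis by (intro exI[of _ 0]) auto
      next
        case False2: False
        have "Up (take (Suc i') p' ! 0) (take (Suc i') p' ! Suc 0)"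
          by (rule successively_nth[OF i'(2)]) (use i' False2 in auto)
        then have "Up (hd p') (p' ! 1)" using False False2 by (simp add: hd_conv_nth)
        then have "p' ! 1 = x" using 2 unfolding Up_def by simp
        moreover have "1 < length p'" using i' False2 by auto
        ultimately show ?thesis using xn by (metis nth_mem)
      qed
    qed
  qed
qed

end



context rtree begin

lemma anc_closed: "w \<in> V \<Longrightarrow> z \<in> set (tp w) \<Longrightarrow> set (tp z) \<subseteq> set (tp w)"
  by (metis in_set_conv_nth set_drop_subset tp_drop)

lemma upchain_set: "successively Up q \<Longrightarrow> q \<noteq> [] \<Longrightarrow> hd q \<in> V \<Longrightarrow> set q \<subseteq> set (tp (hd q))"
  using upchain_tp by (metis set_take_subset)

lemma tp_hd_mem: "w \<in> V \<Longrightarrow> w \<in> set (tp w)"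
  using tp tp_ne by (metis list.set_sel(1))

lemma tp_last_mem: "w \<in> V \<Longrightarrow> r \<in> set (tp w)"
  using tp tp_ne by (metis last_in_set)

end

locale rsetup = rtree +
  fixes X :: "'a set"
  assumes XV: "X \<subseteq> V" and rX: "r \<in> X"
begin

definition S where "S = span_vertices E X"
definition Y where "Y = X \<union> {v \<in> S. deg_in E S v \<ge> 3}"

lemma S_char: "S = (\<Union>x\<in>X. set (tp x))"
proof
  show "(\<Union>x\<in>X. set (tp x)) \<subseteq> S"
  proof
    fix w assume "w \<in> (\<Union>x\<in>X. set (tp x))"
    then obtain x where x: "x \<in> X" "w \<in> set (tp x)" by blast
    have xV: "x \<in> V" using x XV by auto
    show "w \<in> S"
    proof (cases "w = x \<or> w = r")
      case True then show ?thesis using x rX unfolding S_def span_vertices_def by auto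
    next
      case False
      then have "w \<in> path_interior E x r" unfolding path_interior_def using tp[OF xV] x by blast
      then show ?thesis using x rX unfolding S_def span_vertices_def by blast
    qed
  qed
next
  show "S \<subseteq> (\<Union>x\<in>X. set (tp x))"
  proof
    fix w assume "w \<in> S"
    then consider "w \<in> X" | x x' where "x \<in> X" "x' \<in> X" "w \<in> path_interior E x x'"
      unfolding S_def span_vertices_def by blast
    then show "w \<in> (\<Union>x\<in>X. set (tp x))"
    proof cases
      case 1 then show ?thesis using tp_hd_mem XV by blast
    next
      case 2
      then obtain p where p: "is_path E p" "hd p = x" "last p = x'" "w \<in> set p"
        unfolding path_interior_def by blast
      have pne: "p \<noteq> []" using p by (auto simp: path_succ)
      obtain i where i: "i < length p" "successively Up (take (Suc i) p)" "successively Up (rev (drop i p))"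
        using turn[OF p(1)] by blast
      obtain j where j: "j < length p" "p ! j = w" using p(4) by (metis in_set_conv_nth)
      show ?thesis
      proof (cases "j \<le> i")
        case True
        then have "w \<in> set (take (Suc i) p)" using j by (metis in_set_conv_nth length_take min_less_iff_conj nth_take le_imp_less_Suc)
        moreover have "set (take (Suc i) p) \<subseteq> set (tp x)"
          using upchain_set[OF i(2)] pne p(2) 2 XV by auto
        ultimately show ?thesis using 2 by blast
      next
        case False
        then have "w \<in> set (rev (drop i p))" using j by (simp add: in_set_conv_nth) (metis add_diff_inverse_nat diff_less_mono le_less_linear nat_less_le)
        moreover have "hd (rev (drop i p)) = x'" using p(3) i(1) by (simp add: hd_rev)
        moreover have "rev (drop i p) \<noteq> []" using i(1) by simp
        ultimately have "w \<in> set (tp x')" using upchain_set[OF i(3)] 2 XV by auto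
        then show ?thesis using 2 by blast
      qed
    qed
  qed
qed

lemma SV: "S \<subseteq> V" using S_char tp_set XV by blast
lemma XS: "X \<subseteq> S" using S_char tp_hd_mem XV by blast
lemma YS: "Y \<subseteq> S" unfolding Y_def using XS by auto
lemma YV: "Y \<subseteq> V" using YS SV by auto
lemma rY: "r \<in> Y" using rX unfolding Y_def by auto
lemma finS: "finite S" using SV finV finite_subset by auto
lemma finY: "finite Y" using YV finV finite_subset by auto

lemma S_anc: "w \<in> S \<Longrightarrow> set (tp w) \<subseteq> S"
  using S_char anc_closed XV by (smt (verit) UN_iff subset_eq)

lemma deg3: assumes "t \<in> S" "a \<in> S" "b \<in> S" "d \<in> S" "E t a" "E t b" "E t d"
  "a \<noteq> b" "a \<noteq> d" "b \<noteq> d" shows "t \<in> Y"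
proof -
  have "{a, b, d} \<subseteq> {w \<in> S. E t w}" using assms by auto
  then have "card {a, b, d} \<le> card {w \<in> S. E t w}" using finS by (intro card_mono) auto
  then have "deg_in E S t \<ge> 3" unfolding deg_in_def using assms by simp
  then show ?thesis unfolding Y_def using assms by auto
qed

definition pidx where "pidx y = (LEAST i. 0 < i \<and> i < length (tp y) \<and> tp y ! i \<in> Y)"
definition par where "par y = tp y ! pidx y"

lemma par_char: assumes "0 < n" "n < length (tp y)" "tp y ! n \<in> Y"
  "\<And>j. 0 < j \<Longrightarrow> j < n \<Longrightarrow> tp y ! j \<notin> Y"
  shows "pidx y = n" "par y = tp y ! n"
proof -
  show "pidx y = n" unfolding pidx_def
    by (rule Least_equality) (use assms in \<open>auto simp: not_less[symmetric]\<close>)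
  then show "par y = tp y ! n" unfolding par_def by simp
qed

lemma par_in: assumes "y \<in> V" "y \<noteq> r" shows "par y \<in> Y"
proof -
  have ex: "\<exists>i. 0 < i \<and> i < length (tp y) \<and> tp y ! i \<in> Y"
  proof (intro exI conjI)
    have "tp y = y # tp (up y)" using tp_up assms by auto
    then have l: "length (tp y) \<ge> 2" using tp_ne[of "up y"] tp_up(2)[OF assms] by (cases "tp (up y)") auto
    show "0 < length (tp y) - 1" "length (tp y) - 1 < length (tp y)" using l by auto
    show "tp y ! (length (tp y) - 1) \<in> Y" using rY tp[OF assms(1)] tp_ne[OF assms(1)] by (simp add: last_conv_nth)
  qed
  show ?thesis unfolding par_def pidx_def using LeastI_ex[OF ex] by blast
qed

end



context rsetup begin

lemma up_par: assumes q: "is_path E q" "successively Up q" "hd q = u" "last q = v" "u \<noteq> v" "u \<in> V" "v \<in> Y"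
  and av: "\<forall>w\<in>set q. w \<noteq> u \<and> w \<noteq> v \<longrightarrow> w \<notin> Y"
  shows "u \<noteq> r \<and> par u = v"
proof -
  have qne: "q \<noteq> []" and dq: "distinct q" using q(1) by (auto simp: path_succ)
  define n where "n = length q"
  have n2: "n \<ge> 2"
  proof (rule ccontr)
    assume "\<not> ?thesis"
    moreover have "length q > 0" using qne by simp
    ultimately have "length q = 1" using n_def by linarith
    then have "q = [hd q]" by (cases q) auto
    then show False using q by (metis last_ConsL)
  qed
  have qt: "q = take n (tp u)" using upchain_tp[OF q(2) qne] q(3,6) n_def by simp
  have nl: "n \<le> length (tp u)" using qt n_def by (metis length_take min.bounded_iff nle_le)
  have qj: "\<And>j. j < n \<Longrightarrow> tp u ! j = q ! j" using qt by (metis nth_take)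
  have ur: "u \<noteq> r" using nl n2 tp_r by auto
  have ln: "q ! (n - 1) = v" using q(4) qne n_def by (simp add: last_conv_nth)
  have h0: "q ! 0 = u" using q(3) qne by (simp add: hd_conv_nth)
  have "par u = tp u ! (n - 1)"
  proof (rule par_char(2))
    show "0 < n - 1" "n - 1 < length (tp u)" using n2 nl by auto
    show "tp u ! (n - 1) \<in> Y" using qj[of "n-1"] ln q(7) n2 by simp
    fix j assume j: "0 < j" "j < n - 1"
    have "q ! j \<noteq> u" using nth_eq_iff_index_eq[OF dq, of j 0] h0 j n_def qne by auto
    moreover have "q ! j \<noteq> v" using nth_eq_iff_index_eq[OF dq, of j "n-1"] ln j n_def by auto
    moreover have "q ! j \<in> set q" using j n_def by simp
    ultimately show "tp u ! j \<notin> Y" using av qj j by auto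
  qed
  then show ?thesis using ur qj[of "n-1"] ln n2 by simp
qed

lemma claimA: assumes uv: "u \<in> Y" "v \<in> Y" "u \<noteq> v" and p: "is_path E p" "hd p = u" "last p = v"
  and av: "\<forall>w\<in>set p. w \<noteq> u \<and> w \<noteq> v \<longrightarrow> w \<notin> Y"
  shows "(u \<noteq> r \<and> par u = v) \<or> (v \<noteq> r \<and> par v = u)"
proof -
  have pne: "p \<noteq> []" and dp: "distinct p" using p(1) by (auto simp: path_succ)
  obtain i where i: "i < length p" "successively Up (take (Suc i) p)" "successively Up (rev (drop i p))"
    using turn[OF p(1)] by blast
  have uV: "u \<in> V" "v \<in> V" using uv YV by auto
  show ?thesis
  proof (cases "i = length p - 1")
    case True
    then have "take (Suc i) p = p" using i by simp
    then have "u \<noteq> r \<and> par u = v" using up_par[OF p(1) _ p(2,3) uv(3) uV(1) uv(2) av] i(2) by simp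
    then show ?thesis by blast
  next
    case False
    show ?thesis
    proof (cases "i = 0")
      case True
      then have "successively Up (rev p)" using i by simp
      then have "v \<noteq> r \<and> par v = u"
        using up_par[OF path_rev[OF sg p(1)] _ _ _ _ uV(2) uv(1)] p pne uv(3) av
        by (simp add: hd_rev last_rev) 
      then show ?thesis by blast
    next
      case False2: False
      define t where "t = p ! i"
      define a where "a = p ! (i - 1)"
      define b where "b = p ! Suc i"
      have iSi: "Suc i < length p" using False i by auto
      have "Up (take (Suc i) p ! (i - 1)) (take (Suc i) p ! Suc (i - 1))"
        by (rule successively_nth[OF i(2)]) (use False2 i in auto)
      then have Ua: "Up a t" unfolding a_def t_def using False2 by simp
      have "successively (\<lambda>x y. Up y x) (drop i p)" using i(3) by simp
      then have "(\<lambda>x y. Up y x) (drop i p ! 0) (drop i p ! Suc 0)"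
        by (rule successively_nth) (use iSi in auto)
      then have Ub: "Up b t" unfolding b_def t_def using iSi by simp
      have uS: "u \<in> S" "v \<in> S" using uv YS by auto
      have "a \<in> set (take (Suc i) p)"
      proof -
        have "a = take (Suc i) p ! (i - 1)" unfolding a_def using False2 by simp
        moreover have "i - 1 < length (take (Suc i) p)" using i by simp
        ultimately show ?thesis using nth_mem by metis
      qed
      moreover have "set (take (Suc i) p) \<subseteq> set (tp u)"
        using upchain_set[OF i(2)] pne p(2) uV by auto
      ultimately have aS: "a \<in> S" using S_anc[OF uS(1)] by auto
      have "b \<in> set (rev (drop i p))"
      proof -
        have "b = drop i p ! 1" unfolding b_def using iSi by simp
        moreover have "1 < length (drop i p)" using iSi by simp
        ultimately show ?thesis using nth_mem by (metis set_rev)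
      qed
      moreover have "set (rev (drop i p)) \<subseteq> set (tp v)"
        using upchain_set[OF i(3)] i(1) p(3) uV by (simp add: hd_rev)
      ultimately have bS: "b \<in> S" using S_anc[OF uS(2)] by auto
      have aV: "a \<in> V" "a \<noteq> r" "t = up a" using Ua unfolding Up_def by auto
      have bV: "b \<in> V" "b \<noteq> r" "t = up b" using Ub unfolding Up_def by auto
      have tS: "t \<in> S" using S_anc[OF aS] aV tp_up(1)[OF aV(1,2)] tp_hd_mem[OF tp_up(2)[OF aV(1,2)]] by auto
      have h0: "p ! 0 = u" and hl: "p ! (length p - 1) = v" using p pne by (simp_all add: hd_conv_nth last_conv_nth)
      have tu: "t \<noteq> u" "t \<noteq> v" unfolding t_def
        using nth_eq_iff_index_eq[OF dp, of i 0] nth_eq_iff_index_eq[OF dp, of i "length p - 1"] h0 hl iSi False2 pne by auto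
      have tY: "t \<notin> Y" using av tu t_def i by auto
      then have tr: "t \<noteq> r" using rY by auto
      have tV: "t \<in> V" using tS SV by auto
      have utS: "up t \<in> S" using S_anc[OF tS] tp_up(1)[OF tV tr] tp_hd_mem[OF tp_up(2)[OF tV tr]] by auto
      have ab: "a \<noteq> b" unfolding a_def b_def using dp iSi by (simp add: nth_eq_iff_index_eq)
      have da: "dep a = Suc (dep t)" using dep_up aV by simp
      have db: "dep b = Suc (dep t)" using dep_up bV by simp
      have dt: "dep t = Suc (dep (up t))" using dep_up tV tr by simp
      have "up t \<noteq> a" "up t \<noteq> b" using da db dt by auto
      moreover have "E t a" "E t b" "E t (up t)" using tp_up(3)[OF aV(1,2)] tp_up(3)[OF bV(1,2)] tp_up(3)[OF tV tr] aV bV EV by auto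
      ultimately have "t \<in> Y" using deg3[OF tS aS bS utS] ab by metis
      then show ?thesis using tY by blast
    qed
  qed
qed

end



context rsetup begin

lemma claimB: assumes bY: "b \<in> Y" and bX: "b \<notin> X"
  shows "2 \<le> card {y \<in> Y - {r}. par y = b}"
proof -
  have bS: "b \<in> S" and deg: "deg_in E S b \<ge> 3" using bY bX unfolding Y_def by auto
  have br: "b \<noteq> r" using bX rX by auto
  have bV: "b \<in> V" using bS SV by auto
  define Ch where "Ch = {w \<in> S. w \<noteq> r \<and> up w = b}"
  define F where "F = {y \<in> Y - {r}. par y = b}"
  define f where "f y = tp y ! (pidx y - 1)" for y
  have finCh: "finite Ch" unfolding Ch_def using finS by simp
  have finF: "finite F" unfolding F_def using finY by simp
  have "{w \<in> S. E b w} \<subseteq> insert (up b) Ch"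
  proof
    fix w assume w: "w \<in> {w \<in> S. E b w}"
    then have "Up b w \<or> Up w b" using edge by auto
    then show "w \<in> insert (up b) Ch" using w unfolding Up_def Ch_def by auto
  qed
  then have "card {w \<in> S. E b w} \<le> card (insert (up b) Ch)" using finCh by (intro card_mono) auto
  also have "\<dots> \<le> Suc (card Ch)" using finCh by (simp add: card_insert_if)
  finally have c2: "2 \<le> card Ch" using deg unfolding deg_in_def by simp
  have "Ch \<subseteq> f ` F"
  proof
    fix c assume c: "c \<in> Ch"
    then have cS: "c \<in> S" and cr: "c \<noteq> r" and cb: "up c = b" unfolding Ch_def by auto
    obtain x where x: "x \<in> X" "c \<in> set (tp x)" using cS S_char by auto
    have xV: "x \<in> V" using x XV by auto
    obtain ic where ic: "ic < length (tp x)" "tp x ! ic = c" using x by (metis in_set_conv_nth)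
    have Sic: "Suc ic < length (tp x)"
    proof (rule ccontr)
      assume "\<not> ?thesis"
      then have "ic = length (tp x) - 1" using ic by auto
      then have "c = last (tp x)" using ic tp_ne[OF xV] by (simp add: last_conv_nth)
      then show False using tp[OF xV] cr by simp
    qed
    have tb: "tp x ! Suc ic = b" using tp_nth_up(2)[OF xV Sic] ic cb by simp
    define K where "K = {k. k \<le> ic \<and> tp x ! k \<in> Y}"
    have finK: "finite K" unfolding K_def by (rule finite_subset[of _ "{..ic}"]) auto
    have "tp x ! 0 = x" using tp[OF xV] tp_ne[OF xV] by (simp add: hd_conv_nth)
    then have K0: "0 \<in> K" unfolding K_def Y_def using x by simp
    define k where "k = Max K"
    have kK: "k \<in> K" unfolding k_def using finK K0 Max_in by blast
    have kmax: "\<And>k'. k' \<in> K \<Longrightarrow> k' \<le> k" unfolding k_def using finK by simp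
    have kic: "k \<le> ic" "tp x ! k \<in> Y" using kK unfolding K_def by auto
    define y where "y = tp x ! k"
    have yV: "y \<in> V" unfolding y_def using tp_nth_V[OF xV] kic ic by simp
    have ty: "tp y = drop k (tp x)" unfolding y_def using tp_drop[OF xV] kic ic by simp
    have yr: "y \<noteq> r" unfolding y_def using tp_nth_up(1)[OF xV] kic Sic by simp
    define n where "n = Suc ic - k"
    have a1: "0 < n" "n < length (tp y)" unfolding n_def ty using kic Sic by auto
    have a2: "tp y ! n \<in> Y" unfolding n_def ty using kic Sic tb bY by simp
    have a3: "tp y ! j \<notin> Y" if j: "0 < j" "j < n" for j
    proof -
      have "k + j \<notin> K" using kmax j by force
      then show "tp y ! j \<notin> Y" unfolding ty K_def using j kic Sic by (auto simp: n_def)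
    qed
    have pc: "pidx y = n \<and> par y = tp y ! n" using par_char[OF a1 a2 a3] by blast
    have pb: "par y = b" using pc unfolding n_def ty using kic Sic tb by simp
    have "y \<in> F" unfolding F_def using pb yr kic y_def by simp
    moreover have "f y = c" unfolding f_def using pc unfolding n_def ty using kic Sic ic by simp
    ultimately show "c \<in> f ` F" by blast
  qed
  then have "card Ch \<le> card (f ` F)" using finF by (intro card_mono) auto
  also have "\<dots> \<le> card F" using finF card_image_le by blast
  finally show ?thesis using c2 unfolding F_def by simp
qed

lemma countY: "card Y + 1 \<le> 2 * card X"
proof -
  define C where "C = Y - {r}"
  have finC: "finite C" unfolding C_def using finY by simp
  have parC: "par ` C \<subseteq> Y" unfolding C_def using par_in YV by auto
  have "(\<Sum>b\<in>Y. \<Sum>x\<in>{x \<in> C. par x = b}. (1::nat)) = (\<Sum>x\<in>C. 1)"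
    by (rule sum.group[OF finC finY parC])
  then have sC: "(\<Sum>b\<in>Y. card {x \<in> C. par x = b}) = card C" by simp
  have "(\<Sum>b\<in>Y - X. card {x \<in> C. par x = b}) \<le> (\<Sum>b\<in>Y. card {x \<in> C. par x = b})"
    using finY by (intro sum_mono2) auto
  moreover have "(\<Sum>b\<in>Y - X. (2::nat)) \<le> (\<Sum>b\<in>Y - X. card {x \<in> C. par x = b})"
    using claimB unfolding C_def by (intro sum_mono) auto
  ultimately have "2 * card (Y - X) \<le> card C" using sC by simp
  moreover have "card C = card Y - 1" unfolding C_def using rY finY by simp
  moreover have "X \<subseteq> Y" unfolding Y_def by auto
  moreover have "card (Y - X) = card Y - card X" using calculation(3) finY
    by (meson card_Diff_subset finite_subset)
  moreover have "card Y \<ge> 1" using rY finY by (metis One_nat_def Suc_leI card_gt_0_iff empty_iff)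
  moreover have "card X \<le> card Y" using calculation(3) finY card_mono by blast
  ultimately show ?thesis by linarith
qed

lemma final_bound:
  fixes m :: "'a \<Rightarrow> 'a \<Rightarrow> 'a"
  assumes m_sym: "\<forall>u\<in>Y. \<forall>v\<in>Y. m u v = m v u"
  shows "card (Y \<union> {m u v | u v. u \<in> Y \<and> v \<in> Y \<and> path_interior E u v \<noteq> {} \<and>
                                   path_interior E u v \<inter> Y = {}}) + 3 \<le> 4 * card X"
proof -
  define C where "C = Y - {r}"
  define M where "M = {m u v | u v. u \<in> Y \<and> v \<in> Y \<and> path_interior E u v \<noteq> {} \<and>
                                   path_interior E u v \<inter> Y = {}}"
  have finC: "finite C" unfolding C_def using finY by simp
  have "M \<subseteq> (\<lambda>y. m y (par y)) ` C"
  proof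
    fix z assume "z \<in> M"
    then obtain u v where uv: "z = m u v" "u \<in> Y" "v \<in> Y" "path_interior E u v \<noteq> {}"
      "path_interior E u v \<inter> Y = {}" unfolding M_def by blast
    then obtain w p where p: "is_path E p" "hd p = u" "last p = v" "w \<in> set p" "w \<noteq> u" "w \<noteq> v"
      unfolding path_interior_def by blast
    have "u \<noteq> v"
    proof
      assume "u = v"
      then have "p = [hd p]" using distinct_hd_last p by (metis path_succ)
      then show False using p by (metis empty_iff empty_set set_ConsD)
    qed
    moreover have "\<forall>w\<in>set p. w \<noteq> u \<and> w \<noteq> v \<longrightarrow> w \<notin> Y"
      using uv(5) p unfolding path_interior_def by blast
    ultimately have "(u \<noteq> r \<and> par u = v) \<or> (v \<noteq> r \<and> par v = u)"
      using claimA[OF uv(2,3) _ p(1-3)] by blast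
    then show "z \<in> (\<lambda>y. m y (par y)) ` C"
      using uv m_sym unfolding C_def by force
  qed
  then have "card M \<le> card C" using finC by (meson card_image_le card_mono finite_imageI le_trans)
  moreover have "card C = card Y - 1" unfolding C_def using rY finY by simp
  moreover have "card (Y \<union> M) \<le> card Y + card M" by (rule card_Un_le)
  moreover have "card Y \<ge> 1" using rY finY by (metis One_nat_def Suc_leI card_gt_0_iff empty_iff)
  ultimately show ?thesis using countY unfolding M_def by linarith
qed

end



lemma hm_fin: assumes "finite V" shows "finite {H. heavy_module V E c t H}"
  and "k_t V E c t \<le> 2 ^ card V"
proof -
  have sub: "{H. heavy_module V E c t H} \<subseteq> Pow V" unfolding heavy_module_def by auto
  show "finite {H. heavy_module V E c t H}" using sub assms finite_subset by blast
  have "k_t V E c t \<le> card (Pow V)" unfolding k_t_def using sub assms by (intro card_mono) auto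
  then show "k_t V E c t \<le> 2 ^ card V" using assms by (simp add: card_Pow)
qed

lemma kmax_ge: assumes "finite V" "t \<ge> 0" shows "k_t V E c t \<le> k_max V E c"
proof -
  have "{k_t V E c t | t. t \<ge> 0} \<subseteq> {..2 ^ card V}" using hm_fin(2)[OF assms(1)] by auto
  then have "finite {k_t V E c t | t. t \<ge> 0}" using finite_subset by blast
  then show ?thesis unfolding k_max_def using assms(2) by (intro Max_ge) auto
qed

theorem lemma11:
  fixes V :: "'a set" and E :: "'a \<Rightarrow> 'a \<Rightarrow> bool" and c :: "'a \<Rightarrow> real" and a :: real
    and X Y Z :: "'a set" and m :: "'a \<Rightarrow> 'a \<Rightarrow> 'a"
  assumes tree: "is_tree V E"
    and cpos: "\<forall>v\<in>V. c v > 0"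
    and a_nonneg: "a \<ge> 0"
    and light: "\<exists>v\<in>V. c v \<le> a"
    and X_sub: "X \<subseteq> \<Union>{H. heavy_module V E c a H}"
    and X_one: "\<forall>H. heavy_module V E c a H \<longrightarrow> card (X \<inter> H) = 1"
    and Y_def: "Y = X \<union> {v \<in> span_vertices E X. deg_in E (span_vertices E X) v \<ge> 3}"
    and m_sym: "\<forall>u\<in>Y. \<forall>v\<in>Y. m u v = m v u"
    and m_in: "\<forall>u\<in>Y. \<forall>v\<in>Y. path_interior E u v \<noteq> {} \<and> path_interior E u v \<inter> Y = {} \<longrightarrow>
                 m u v \<in> path_interior E u v \<and> (\<forall>w\<in>path_interior E u v. c (m u v) \<le> c w)"
    and Z_def: "Z = Y \<union> {m u v | u v. u \<in> Y \<and> v \<in> Y \<and> path_interior E u v \<noteq> {} \<and>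
                                   path_interior E u v \<inter> Y = {}}"
  shows "int (card Z) \<le> 4 * int (k_max V E c) - 3"
proof -
  have finV: "finite V" using tree unfolding is_tree_def simple_graph_def by auto
  have "heavy_module V E c 0 V"
    using tree cpos unfolding heavy_module_def is_tree_def by auto
  then have "1 \<le> k_t V E c 0" unfolding k_t_def using hm_fin(1)[OF finV]
    by (metis One_nat_def Suc_leI card_gt_0_iff empty_iff mem_Collect_eq)
  then have k1: "1 \<le> k_max V E c" using kmax_ge[OF finV, of 0 E c] by simp
  define HM where "HM = {H. heavy_module V E c a H}"
  have finHM: "finite HM" unfolding HM_def using hm_fin(1)[OF finV] .
  have XV: "X \<subseteq> V" using X_sub unfolding heavy_module_def by auto
  define g where "g x = (SOME H. H \<in> HM \<and> x \<in> H)" for x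
  have g: "g x \<in> HM \<and> x \<in> g x" if "x \<in> X" for x
    unfolding g_def using X_sub that HM_def by (metis (mono_tags, lifting) UnionE subsetD someI)
  have "inj_on g X"
  proof
    fix x y assume xy: "x \<in> X" "y \<in> X" "g x = g y"
    have "card (X \<inter> g x) = 1" using X_one g xy(1) HM_def by auto
    moreover have "x \<in> X \<inter> g x" "y \<in> X \<inter> g x" using g xy by auto
    ultimately show "x = y" by (metis card_1_singletonE singletonD)
  qed
  moreover have "g ` X \<subseteq> HM" using g by auto
  ultimately have "card X \<le> card HM" using finHM card_inj_on_le by blast
  also have "\<dots> = k_t V E c a" unfolding HM_def k_t_def by simp
  also have "\<dots> \<le> k_max V E c" using kmax_ge[OF finV a_nonneg] .
  finally have kX: "card X \<le> k_max V E c" .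
  show ?thesis
  proof (cases "X = {}")
    case True
    then have "span_vertices E X = {}" unfolding span_vertices_def by simp
    then have "Y = {}" using Y_def True by simp
    then have "Z = {}" using Z_def by simp
    then show ?thesis using k1 by simp
  next
    case False
    then obtain r where rX: "r \<in> X" by blast
    interpret rsetup V E r X
      by unfold_locales (use tree XV rX in auto)
    have "Y = local.Y" unfolding local.Y_def local.S_def using assms(7) by simp
    then have "card Z + 3 \<le> 4 * card X" using final_bound[of m] m_sym Z_def by simp
    then show ?thesis using kX by linarith
  qed
qed


end
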